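(* Let $M,N,L$ be weight sequences satisfying $m_k^{1/k}\to\infty$, $n_k^{1/k}\to\infty$, $\ell_k^{1/k}\to\infty$. Assume that there is $A>0$ with $\mu_{2k}\le A\nu_k$ for all $k$, and that there is $C\ge1$ with $\frac{\nu_j}{j}\le C\frac{\lambda_k}{k}$ for all $1\le j\le k$. Then there exists $D\ge1$ such that $2\underline{\Gamma}_\ell(Dt)\le\underline{\Gamma}_m(t)$ for all $t>0$.
   Context: A weight sequence is given by an increasing sequence $1=\mu_0\le\mu_1\le\cdots$ via $M_k=\mu_0\cdots\mu_k=k!\,m_k$, with $M_k^{1/k}\to\infty$; analogously $\nu\leftrightarrow N\leftrightarrow n$ and $\lambda\leftrightarrow L\leftrightarrow\ell$. For a positive sequence $m$ with $m_0=1$ and $m_{k+1}/m_k\to\infty$, $\underline{\Gamma}_m(t)=\min\{k: m_{k+1}/m_k\ge1/t\}$ for $t>0$. *)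

theory Defs
  imports Complex_Main
begin

text \<open>A weight sequence is given by its quotient sequence mu with
  1 = mu 0 <= mu 1 <= ..., M k = mu 0 * ... * mu k, and M k ^ (1/k) tending to infinity.\<close>

definition Mseq :: "(nat \<Rightarrow> real) \<Rightarrow> nat \<Rightarrow> real" where
  "Mseq \<mu> k = (\<Prod>i\<le>k. \<mu> i)"

definition mseq :: "(nat \<Rightarrow> real) \<Rightarrow> nat \<Rightarrow> real" where
  "mseq \<mu> k = Mseq \<mu> k / fact k"

definition weight_sequence :: "(nat \<Rightarrow> real) \<Rightarrow> bool" where
  "weight_sequence \<mu> \<longleftrightarrow> \<mu> 0 = 1 \<and> (\<forall>k. \<mu> k \<le> \<mu> (Suc k)) \<and>
     filterlim (\<lambda>k. root k (Mseq \<mu> k)) at_top sequentially"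

definition Gamma_low :: "(nat \<Rightarrow> real) \<Rightarrow> real \<Rightarrow> nat" where
  "Gamma_low m t = (LEAST k. m (Suc k) / m k \<ge> 1 / t)"

end

theory Submission
  imports Defs
begin

lemma ws_ge1: assumes "weight_sequence mu" shows "mu i \<ge> 1"
proof -
  have m: "\<And>k. mu k \<le> mu (Suc k)" and z: "mu 0 = 1" using assms unfolding weight_sequence_def by auto
  have "mu 0 \<le> mu i" using lift_Suc_mono_le[of mu, OF m] by simp
  thus ?thesis using z by simp
qed

lemma ws_mono: assumes "weight_sequence mu" "i \<le> j" shows "mu i \<le> mu j"
proof -
  have m: "\<And>k. mu k \<le> mu (Suc k)" using assms unfolding weight_sequence_def by auto
  show ?thesis using lift_Suc_mono_le[of mu, OF m] assms(2) by simp
qed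

lemma Mseq_pos: assumes "weight_sequence mu" shows "Mseq mu k > 0"
  unfolding Mseq_def using ws_ge1[OF assms] by (intro prod_pos) (auto intro: less_le_trans[of 0 1])

lemma ratio: assumes "weight_sequence mu"
  shows "mseq mu (Suc k) / mseq mu k = mu (Suc k) / real (Suc k)"
proof -
  have M: "Mseq mu (Suc k) = Mseq mu k * mu (Suc k)" unfolding Mseq_def by simp
  have p: "Mseq mu k > 0" by (rule Mseq_pos[OF assms])
  have f: "fact (Suc k) = real (Suc k) * (fact k :: real)" by simp
  have fk: "(fact k :: real) > 0" by simp
  show ?thesis unfolding mseq_def M f using p fk by (simp add: divide_simps)
qed

lemma mseq_pos: assumes "weight_sequence mu" shows "mseq mu k > 0"
  unfolding mseq_def using Mseq_pos[OF assms] by simp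

lemma exists_k: assumes w: "weight_sequence mu"
  and g: "filterlim (\<lambda>k. root k (mseq mu k)) at_top sequentially" and t: "t > 0"
  shows "\<exists>k. mseq mu (Suc k) / mseq mu k \<ge> 1 / t"
proof (rule ccontr)
  assume "\<not> ?thesis"
  hence lt: "\<And>k. mseq mu (Suc k) < (1/t) * mseq mu k"
    using mseq_pos[OF w] by (simp add: not_le pos_divide_less_eq)
  have b: "mseq mu k \<le> (1/t)^k" for k
  proof (induction k)
    case 0 show ?case by (simp add: mseq_def Mseq_def weight_sequence_def w[unfolded weight_sequence_def])
  next
    case (Suc k)
    have "mseq mu (Suc k) \<le> (1/t) * mseq mu k" using lt[of k] by simp
    also have "\<dots> \<le> (1/t) * (1/t)^k" using Suc t by (intro mult_left_mono) auto
    finally show ?case by simp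
  qed
  have "eventually (\<lambda>k. root k (mseq mu k) > 1/t \<and> k \<ge> 1) sequentially"
    using g[unfolded filterlim_at_top_dense] eventually_ge_at_top[of 1] eventually_conj by blast
  then obtain k where k: "root k (mseq mu k) > 1/t" "k \<ge> 1" by (auto simp: eventually_sequentially)
  have "root k (mseq mu k) \<le> root k ((1/t)^k)"
    using b[of k] k(2) by (subst real_root_le_iff) auto
  also have "\<dots> = 1/t" using k(2) t by (simp add: real_root_pos2)
  finally show False using k(1) by simp
qed

theorem lemma3p4:
  fixes mu nu la :: "nat \<Rightarrow> real"
  assumes wM: "weight_sequence mu" and wN: "weight_sequence nu" and wL: "weight_sequence la"
    and gm: "filterlim (\<lambda>k. root k (mseq mu k)) at_top sequentially"
    and gn: "filterlim (\<lambda>k. root k (mseq nu k)) at_top sequentially"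
    and gl: "filterlim (\<lambda>k. root k (mseq la k)) at_top sequentially"
    and hA: "\<exists>A>0. \<forall>k. mu (2 * k) \<le> A * nu k"
    and hC: "\<exists>C\<ge>1. \<forall>j k. 1 \<le> j \<and> j \<le> k \<longrightarrow> nu j / real j \<le> C * (la k / real k)"
  shows "\<exists>D\<ge>1. \<forall>t>0. 2 * Gamma_low (mseq la) (D * t) \<le> Gamma_low (mseq mu) t"
proof -
  obtain A where A: "A > 0" "\<And>k. mu (2 * k) \<le> A * nu k" using hA by auto
  obtain C where C: "C \<ge> 1" "\<And>j k. 1 \<le> j \<Longrightarrow> j \<le> k \<Longrightarrow> nu j / real j \<le> C * (la k / real k)"
    using hC by auto
  define D where "D = max 1 (A * C)"
  have D1: "D \<ge> 1" and DAC: "D \<ge> A * C" unfolding D_def by auto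
  have "2 * Gamma_low (mseq la) (D * t) \<le> Gamma_low (mseq mu) t" if t: "t > 0" for t
  proof -
    define k where "k = Gamma_low (mseq mu) t"
    have "mseq mu (Suc k) / mseq mu k \<ge> 1 / t"
      unfolding k_def Gamma_low_def using exists_k[OF wM gm t] by (rule LeastI_ex)
    hence mk: "mu (Suc k) / real (Suc k) \<ge> 1 / t" using ratio[OF wM] by simp
    define j where "j = k div 2"
    have jk: "Suc k \<le> 2 * Suc j" "Suc j \<le> Suc k" unfolding j_def by auto
    have "mu (Suc k) \<le> mu (2 * Suc j)" using ws_mono[OF wM jk(1)] .
    also have "\<dots> \<le> A * nu (Suc j)" by (rule A(2))
    finally have mun: "mu (Suc k) \<le> A * nu (Suc j)" .
    have "real (Suc k) / t \<le> mu (Suc k)" using mk t by (simp add: field_simps)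
    hence "real (Suc k) / t \<le> A * nu (Suc j)" using mun by linarith
    hence "real (Suc k) / (A * t) \<le> nu (Suc j)" using A(1) t by (simp add: field_simps)
    moreover have "real (Suc j) / (A * t) \<le> real (Suc k) / (A * t)"
      using jk(2) A(1) t by (intro divide_right_mono) auto
    ultimately have "real (Suc j) / (A * t) \<le> nu (Suc j)" by linarith
    hence "1 / (A * t) \<le> nu (Suc j) / real (Suc j)" by (simp add: field_simps)
    also have "\<dots> \<le> C * (la (Suc j) / real (Suc j))" using C(2)[of "Suc j" "Suc j"] by simp
    finally have h: "1 / (A * t) \<le> C * (la (Suc j) / real (Suc j))" .
    have "1 / (A * C * t) = (1 / (A * t)) / C" by simp
    also have "\<dots> \<le> C * (la (Suc j) / real (Suc j)) / C" using h C(1) by (intro divide_right_mono) auto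
    also have "\<dots> = la (Suc j) / real (Suc j)" using C(1) by simp
    finally have "1 / (A * C * t) \<le> la (Suc j) / real (Suc j)" .
    moreover have "1 / (D * t) \<le> 1 / (A * C * t)"
      using DAC D1 A(1) C(1) t by (intro divide_left_mono mult_right_mono mult_pos_pos) auto
    ultimately have "mseq la (Suc j) / mseq la j \<ge> 1 / (D * t)" using ratio[OF wL] by simp
    hence "Gamma_low (mseq la) (D * t) \<le> j" unfolding Gamma_low_def by (rule Least_le)
    thus ?thesis unfolding k_def[symmetric] j_def by simp
  qed
  thus ?thesis using D1 by blast
qed

end
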